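(* For every algebraic type $\tau$, $\mathsf{FiCA}_\tau=\mathbb{I}\,\mathsf{BLK}_\tau$: a clone $\tau$-algebra is finite dimensional if and only if it is isomorphic to a block $\tau$-algebra.
   Context: Let $\omega=\{1,2,\dots\}$. A clone $\tau$-algebra is an algebra $\mathbf C=(C,\sigma^{\mathbf C}\ (\sigma\in\tau),q_n^{\mathbf C}\ (n\ge0),\mathsf e_i^{\mathbf C}\ (i\ge1))$ with $\mathsf e_i$ nullary and $q_n$ of arity $n+1$ satisfying: (C1) $q_n(\mathsf e_i,x_1,\dots,x_n)=x_i$ ($1\le i\le n$); (C2) $q_n(\mathsf e_j,x_1,\dots,x_n)=\mathsf e_j$ ($j>n$); (C3) $q_n(x,\mathsf e_1,\dots,\mathsf e_n)=x$; (C4) $q_k(x,y_1,\dots,y_k)=q_n(x,y_1,\dots,y_k,\mathsf e_{k+1},\dots,\mathsf e_n)$ ($n>k$); (C5) $q_n(q_n(x,\mathbf y),\mathbf z)=q_n(x,q_n(y_1,\mathbf z),\dots,q_n(y_n,\mathbf z))$; (C6) $q_n(\sigma(x_1,\dots,x_k),\mathbf y)=\sigma(q_n(x_1,\mathbf y),\dots,q_n(x_k,\mathbf y))$ for $\sigma\in\tau$ of arity $k$. An element $a$ is independent of $\mathsf e_n$ if $q_n(a,\mathsf e_1,\dots,\mathsf e_{n-1},\mathsf e_{n+1})=a$; $a$ has finite dimension if it is dependent on only finitely many $\mathsf e_n$. $\mathsf{FiCA}_\tau$ is the class of clone $\tau$-algebras all of whose elements have finite dimension. For a $\tau$-algebra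 $\mathbf A$, the full functional clone $\tau$-algebra with value domain $\mathbf A$ has universe all functions $A^\omega\to A$ and operations $\mathsf e_i(s)=s_i$, $q_n(\varphi,\psi_1,\dots,\psi_n)(s)=\varphi(s[\psi_1(s),\dots,\psi_n(s)])$ (where $s[b_1,\dots,b_n]$ replaces the first $n$ entries of $s$ by the $b_i$), $\sigma(\psi_1,\dots,\psi_n)(s)=\sigma^{\mathbf A}(\psi_1(s),\dots,\psi_n(s))$. The top extension of a finitary $f:A^n\to A$ ($n\ge0$) is $f^\top(s)=f(s_1,\dots,s_n)$. $\mathsf{BLK}_\tau$ is the class of subalgebras of full functional clone $\tau$-algebras (over any $\tau$-algebra $\mathbf A$) whose elements are all top extensions of finitary operations on $A$. $\mathbb I$ denotes closure under isomorphic copies. *)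

theory Defs
  imports "HOL-Library.FuncSet"
begin

text \<open>An algebraic type tau is given by a type of operation symbols 'sym together
  with an arity function ar. Variables e_i are indexed by i >= 1 (e 0 is unused).
  q n x ys stands for q_n(x, y_1, ..., y_n) where ys = [y_1, ..., y_n].\<close>

definition tau_alg :: "('sym \<Rightarrow> nat) \<Rightarrow> 'a set \<Rightarrow> ('sym \<Rightarrow> 'a list \<Rightarrow> 'a) \<Rightarrow> bool" where
  "tau_alg ar A F \<longleftrightarrow> (\<forall>\<sigma> xs. length xs = ar \<sigma> \<and> set xs \<subseteq> A \<longrightarrow> F \<sigma> xs \<in> A)"

definition clone_sig_alg :: "('sym \<Rightarrow> nat) \<Rightarrow> 'c set \<Rightarrow> ('sym \<Rightarrow> 'c list \<Rightarrow> 'c)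
    \<Rightarrow> (nat \<Rightarrow> 'c \<Rightarrow> 'c list \<Rightarrow> 'c) \<Rightarrow> (nat \<Rightarrow> 'c) \<Rightarrow> bool" where
  "clone_sig_alg ar C sig q e \<longleftrightarrow>
     tau_alg ar C sig \<and>
     (\<forall>n x ys. x \<in> C \<and> length ys = n \<and> set ys \<subseteq> C \<longrightarrow> q n x ys \<in> C) \<and>
     (\<forall>i\<ge>1. e i \<in> C)"

definition clone_alg :: "('sym \<Rightarrow> nat) \<Rightarrow> 'c set \<Rightarrow> ('sym \<Rightarrow> 'c list \<Rightarrow> 'c)
    \<Rightarrow> (nat \<Rightarrow> 'c \<Rightarrow> 'c list \<Rightarrow> 'c) \<Rightarrow> (nat \<Rightarrow> 'c) \<Rightarrow> bool" where
  "clone_alg ar C sig q e \<longleftrightarrow>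
     clone_sig_alg ar C sig q e \<and>
     \<comment> \<open>(C1)\<close>
     (\<forall>n ys i. length ys = n \<and> set ys \<subseteq> C \<and> 1 \<le> i \<and> i \<le> n \<longrightarrow> q n (e i) ys = ys ! (i - 1)) \<and>
     \<comment> \<open>(C2)\<close>
     (\<forall>n ys j. length ys = n \<and> set ys \<subseteq> C \<and> j > n \<longrightarrow> q n (e j) ys = e j) \<and>
     \<comment> \<open>(C3)\<close>
     (\<forall>n x. x \<in> C \<longrightarrow> q n x (map e [1..<n+1]) = x) \<and>
     \<comment> \<open>(C4)\<close>
     (\<forall>n k x ys. n > k \<and> x \<in> C \<and> length ys = k \<and> set ys \<subseteq> C \<longrightarrow>
        q k x ys = q n x (ys @ map e [k+1..<n+1])) \<and>
     \<comment> \<open>(C5)\<close>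
     (\<forall>n x ys zs. x \<in> C \<and> length ys = n \<and> set ys \<subseteq> C \<and> length zs = n \<and> set zs \<subseteq> C \<longrightarrow>
        q n (q n x ys) zs = q n x (map (\<lambda>y. q n y zs) ys)) \<and>
     \<comment> \<open>(C6)\<close>
     (\<forall>n \<sigma> xs ys. length xs = ar \<sigma> \<and> set xs \<subseteq> C \<and> length ys = n \<and> set ys \<subseteq> C \<longrightarrow>
        q n (sig \<sigma> xs) ys = sig \<sigma> (map (\<lambda>x. q n x ys) xs))"

definition indep_of :: "(nat \<Rightarrow> 'c \<Rightarrow> 'c list \<Rightarrow> 'c) \<Rightarrow> (nat \<Rightarrow> 'c) \<Rightarrow> 'c \<Rightarrow> nat \<Rightarrow> bool" where
  "indep_of q e a n \<longleftrightarrow> q n a (map e [1..<n] @ [e (n+1)]) = a"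

definition finite_dim :: "(nat \<Rightarrow> 'c \<Rightarrow> 'c list \<Rightarrow> 'c) \<Rightarrow> (nat \<Rightarrow> 'c) \<Rightarrow> 'c \<Rightarrow> bool" where
  "finite_dim q e a \<longleftrightarrow> finite {n. n \<ge> 1 \<and> \<not> indep_of q e a n}"

definition FiCA :: "('sym \<Rightarrow> nat) \<Rightarrow> 'c set \<Rightarrow> ('sym \<Rightarrow> 'c list \<Rightarrow> 'c)
    \<Rightarrow> (nat \<Rightarrow> 'c \<Rightarrow> 'c list \<Rightarrow> 'c) \<Rightarrow> (nat \<Rightarrow> 'c) \<Rightarrow> bool" where
  "FiCA ar C sig q e \<longleftrightarrow> clone_alg ar C sig q e \<and> (\<forall>a\<in>C. finite_dim q e a)"

text \<open>Functional clone algebras. A sequence s in A^omega is represented 0-based: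
  s k stands for s_{k+1}. Functions A^omega -> A are represented extensionally
  (value undefined outside A^omega).\<close>

definition seqs :: "'a set \<Rightarrow> (nat \<Rightarrow> 'a) set" where
  "seqs A = {s. \<forall>k. s k \<in> A}"

definition full_fun :: "'a set \<Rightarrow> ((nat \<Rightarrow> 'a) \<Rightarrow> 'a) set" where
  "full_fun A = seqs A \<rightarrow>\<^sub>E A"

definition fe :: "'a set \<Rightarrow> nat \<Rightarrow> (nat \<Rightarrow> 'a) \<Rightarrow> 'a" where
  "fe A i = restrict (\<lambda>s. s (i - 1)) (seqs A)"

definition fq :: "'a set \<Rightarrow> nat \<Rightarrow> ((nat \<Rightarrow> 'a) \<Rightarrow> 'a) \<Rightarrow> ((nat \<Rightarrow> 'a) \<Rightarrow> 'a) list
    \<Rightarrow> (nat \<Rightarrow> 'a) \<Rightarrow> 'a" where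
  "fq A n \<phi> \<psi>s = restrict (\<lambda>s. \<phi> (\<lambda>k. if k < n then (\<psi>s ! k) s else s k)) (seqs A)"

definition fsig :: "'a set \<Rightarrow> ('sym \<Rightarrow> 'a list \<Rightarrow> 'a) \<Rightarrow> 'sym \<Rightarrow> ((nat \<Rightarrow> 'a) \<Rightarrow> 'a) list
    \<Rightarrow> (nat \<Rightarrow> 'a) \<Rightarrow> 'a" where
  "fsig A F \<sigma> \<psi>s = restrict (\<lambda>s. F \<sigma> (map (\<lambda>\<psi>. \<psi> s) \<psi>s)) (seqs A)"

definition finitary_op :: "'a set \<Rightarrow> nat \<Rightarrow> ('a list \<Rightarrow> 'a) \<Rightarrow> bool" where
  "finitary_op A n f \<longleftrightarrow> (\<forall>xs. length xs = n \<and> set xs \<subseteq> A \<longrightarrow> f xs \<in> A)"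

definition top_ext :: "'a set \<Rightarrow> nat \<Rightarrow> ('a list \<Rightarrow> 'a) \<Rightarrow> (nat \<Rightarrow> 'a) \<Rightarrow> 'a" where
  "top_ext A n f = restrict (\<lambda>s. f (map s [0..<n])) (seqs A)"

definition block_alg :: "('sym \<Rightarrow> nat) \<Rightarrow> 'a set \<Rightarrow> ('sym \<Rightarrow> 'a list \<Rightarrow> 'a)
    \<Rightarrow> ((nat \<Rightarrow> 'a) \<Rightarrow> 'a) set \<Rightarrow> bool" where
  "block_alg ar A F B \<longleftrightarrow>
     tau_alg ar A F \<and>
     B \<subseteq> full_fun A \<and>
     clone_sig_alg ar B (fsig A F) (fq A) (fe A) \<and>
     (\<forall>\<phi>\<in>B. \<exists>n f. finitary_op A n f \<and> \<phi> = top_ext A n f)"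

definition clone_iso :: "('sym \<Rightarrow> nat)
    \<Rightarrow> 'c set \<Rightarrow> ('sym \<Rightarrow> 'c list \<Rightarrow> 'c) \<Rightarrow> (nat \<Rightarrow> 'c \<Rightarrow> 'c list \<Rightarrow> 'c) \<Rightarrow> (nat \<Rightarrow> 'c)
    \<Rightarrow> 'd set \<Rightarrow> ('sym \<Rightarrow> 'd list \<Rightarrow> 'd) \<Rightarrow> (nat \<Rightarrow> 'd \<Rightarrow> 'd list \<Rightarrow> 'd) \<Rightarrow> (nat \<Rightarrow> 'd)
    \<Rightarrow> ('c \<Rightarrow> 'd) \<Rightarrow> bool" where
  "clone_iso ar C sig q e D sig' q' e' h \<longleftrightarrow>
     bij_betw h C D \<and>
     (\<forall>i\<ge>1. h (e i) = e' i) \<and>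
     (\<forall>\<sigma> xs. length xs = ar \<sigma> \<and> set xs \<subseteq> C \<longrightarrow> h (sig \<sigma> xs) = sig' \<sigma> (map h xs)) \<and>
     (\<forall>n x ys. x \<in> C \<and> length ys = n \<and> set ys \<subseteq> C \<longrightarrow> h (q n x ys) = q' n (h x) (map h ys))"

end

theory Submission
  imports Defs
begin

declare upt_Suc[simp del]

lemma full_fun_ext: "\<phi> \<in> full_fun A \<Longrightarrow> \<phi> \<in> extensional (seqs A)"
  by (auto simp: full_fun_def PiE_def)

lemma full_fun_app: "\<phi> \<in> full_fun A \<Longrightarrow> s \<in> seqs A \<Longrightarrow> \<phi> s \<in> A"
  by (auto simp: full_fun_def)

lemma seqs_upd:
  assumes "s \<in> seqs A" "length \<psi>s = n" "set \<psi>s \<subseteq> full_fun A"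
  shows "(\<lambda>k. if k < n then (\<psi>s ! k) s else s k) \<in> seqs A"
proof -
  have "(if k < n then (\<psi>s ! k) s else s k) \<in> A" for k
  proof (cases "k < n")
    case True
    then have "\<psi>s ! k \<in> full_fun A" using assms nth_mem[of k \<psi>s] by auto
    then show ?thesis using True assms(1) full_fun_app by auto
  next
    case False then show ?thesis using assms(1) by (simp add: seqs_def)
  qed
  then show ?thesis by (simp add: seqs_def)
qed

lemma fq_app: "s \<in> seqs A \<Longrightarrow> fq A n \<phi> \<psi>s s = \<phi> (\<lambda>k. if k < n then (\<psi>s ! k) s else s k)"
  by (simp add: fq_def)

lemma fq_ext: "fq A n \<phi> \<psi>s \<in> extensional (seqs A)"
  by (simp add: fq_def)

lemma fe_app: "s \<in> seqs A \<Longrightarrow> fe A i s = s (i - 1)"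
  by (simp add: fe_def)

lemma fsig_app: "s \<in> seqs A \<Longrightarrow> fsig A F \<sigma> \<psi>s s = F \<sigma> (map (\<lambda>\<psi>. \<psi> s) \<psi>s)"
  by (simp add: fsig_def)

lemma fC1:
  assumes "length ys = n" "set ys \<subseteq> full_fun A" "1 \<le> i" "i \<le> n"
  shows "fq A n (fe A i) ys = ys ! (i - 1)"
proof (rule extensionalityI[OF fq_ext])
  show "ys ! (i - 1) \<in> extensional (seqs A)"
  proof (intro full_fun_ext)
    have "ys ! (i - 1) \<in> set ys" using assms by (intro nth_mem) auto
    then show "ys ! (i - 1) \<in> full_fun A" using assms by blast
  qed
  fix s assume s: "s \<in> seqs A"
  have "seqs A \<noteq> {}" using s by auto
  have "i - 1 < n" using assms by simp
  then show "fq A n (fe A i) ys s = (ys ! (i - 1)) s"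
    using assms s seqs_upd[OF s assms(1,2)] by (simp add: fq_app fe_app)
qed

lemma fC2:
  assumes "length ys = n" "set ys \<subseteq> full_fun A" "j > n"
  shows "fq A n (fe A j) ys = fe A j"
proof (rule extensionalityI[OF fq_ext])
  show "fe A j \<in> extensional (seqs A)" by (simp add: fe_def)
  fix s assume s: "s \<in> seqs A"
  have "\<not> (j - 1 < n)" using assms by simp
  then show "fq A n (fe A j) ys s = fe A j s"
    using assms s seqs_upd[OF s assms(1,2)] by (simp add: fq_app fe_app)
qed

lemma fC3:
  assumes "\<phi> \<in> full_fun A"
  shows "fq A n \<phi> (map (fe A) [1..<n+1]) = \<phi>"
proof (rule extensionalityI[OF fq_ext full_fun_ext[OF assms]])
  fix s assume s: "s \<in> seqs A"
  have "(\<lambda>k. if k < n then (map (fe A) [1..<n+1] ! k) s else s k) = s"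
  proof (rule ext)
    fix k
    have "k < n \<Longrightarrow> map (fe A) [1..<n+1] ! k = fe A (k+1)" by (simp del: upt_Suc)
    then show "(if k < n then (map (fe A) [1..<n+1] ! k) s else s k) = s k"
      using s by (simp add: fe_app)
  qed
  then show "fq A n \<phi> (map (fe A) [1..<n+1]) s = \<phi> s"
    unfolding fq_app[OF s] by (simp only:)
qed

lemma fC4:
  assumes "n > k" "\<phi> \<in> full_fun A" "length ys = k" "set ys \<subseteq> full_fun A"
  shows "fq A k \<phi> ys = fq A n \<phi> (ys @ map (fe A) [k+1..<n+1])"
proof (rule extensionalityI[OF fq_ext fq_ext])
  fix s assume s: "s \<in> seqs A"
  have "(\<lambda>j. if j < k then (ys ! j) s else s j) =
        (\<lambda>j. if j < n then ((ys @ map (fe A) [k+1..<n+1]) ! j) s else s j)"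
  proof (rule ext)
    fix j
    show "(if j < k then (ys ! j) s else s j) =
        (if j < n then ((ys @ map (fe A) [k+1..<n+1]) ! j) s else s j)"
    proof (cases "j < k")
      case True then show ?thesis using assms by (simp add: nth_append)
    next
      case False
      then have "j < n \<Longrightarrow> (ys @ map (fe A) [k+1..<n+1]) ! j = fe A (j+1)"
        using assms by (simp add: nth_append del: upt_Suc)
      then show ?thesis using False s by (simp add: fe_app)
    qed
  qed
  then show "fq A k \<phi> ys s = fq A n \<phi> (ys @ map (fe A) [k+1..<n+1]) s"
    unfolding fq_app[OF s] by (simp only:)
qed

lemma fC5:
  assumes "\<phi> \<in> full_fun A" "length ys = n" "set ys \<subseteq> full_fun A"
    "length zs = n" "set zs \<subseteq> full_fun A"
  shows "fq A n (fq A n \<phi> ys) zs = fq A n \<phi> (map (\<lambda>y. fq A n y zs) ys)"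
proof (rule extensionalityI[OF fq_ext fq_ext])
  fix s assume s: "s \<in> seqs A"
  have t: "(\<lambda>k. if k < n then (zs ! k) s else s k) \<in> seqs A"
    using seqs_upd[OF s assms(4,5)] .
  have "(\<lambda>k. if k < n then (ys ! k) (\<lambda>k. if k < n then (zs ! k) s else s k)
             else (if k < n then (zs ! k) s else s k)) =
        (\<lambda>k. if k < n then (map (\<lambda>y. fq A n y zs) ys ! k) s else s k)"
    using s assms by (auto simp: fq_app)
  then show "fq A n (fq A n \<phi> ys) zs s = fq A n \<phi> (map (\<lambda>y. fq A n y zs) ys) s"
    using s t by (simp add: fq_app)
qed

lemma fC6:
  assumes "length xs = m" "set xs \<subseteq> full_fun A" "length ys = n" "set ys \<subseteq> full_fun A"
  shows "fq A n (fsig A F \<sigma> xs) ys = fsig A F \<sigma> (map (\<lambda>x. fq A n x ys) xs)"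
proof (rule extensionalityI[OF fq_ext])
  show "fsig A F \<sigma> (map (\<lambda>x. fq A n x ys) xs) \<in> extensional (seqs A)"
    by (simp add: fsig_def)
  fix s assume s: "s \<in> seqs A"
  have t: "(\<lambda>k. if k < n then (ys ! k) s else s k) \<in> seqs A"
    using seqs_upd[OF s assms(3,4)] .
  show "fq A n (fsig A F \<sigma> xs) ys s = fsig A F \<sigma> (map (\<lambda>x. fq A n x ys) xs) s"
    using s t by (simp add: fq_app fsig_app o_def)
qed

lemma f_indep:
  assumes "m > n"
  shows "fq A m (top_ext A n f) (map (fe A) [1..<m] @ [fe A (m+1)]) = top_ext A n f"
proof (rule extensionalityI[OF fq_ext])
  show "top_ext A n f \<in> extensional (seqs A)" by (simp add: top_ext_def)
  fix s assume s: "s \<in> seqs A"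
  let ?t = "\<lambda>k. if k < m then ((map (fe A) [1..<m] @ [fe A (m+1)]) ! k) s else s k"
  have t: "?t \<in> seqs A"
    using s by (auto simp: seqs_def fe_app nth_append)
  have "map ?t [0..<n] = map s [0..<n]"
    using assms s by (auto simp: fe_app nth_append)
  then show "fq A m (top_ext A n f) (map (fe A) [1..<m] @ [fe A (m+1)]) s = top_ext A n f s"
  proof -
    have "fq A m (top_ext A n f) (map (fe A) [1..<m] @ [fe A (m+1)]) s = top_ext A n f ?t"
      by (rule fq_app[OF s])
    also have "\<dots> = f (map ?t [0..<n])" unfolding top_ext_def using t by (rule restrict_apply')
    also have "\<dots> = f (map s [0..<n])" by (simp only: \<open>map ?t [0..<n] = map s [0..<n]\<close>)
    also have "\<dots> = top_ext A n f s" unfolding top_ext_def using s by (rule restrict_apply'[symmetric])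
    finally show ?thesis .
  qed
qed


lemma transfer:
  assumes cs: "clone_sig_alg ar C sig q e" and ba: "block_alg ar A F B"
    and iso: "clone_iso ar C sig q e B (fsig A F) (fq A) (fe A) h"
  shows "FiCA ar C sig q e"
proof -
  have inj: "inj_on h C" and img: "h ` C = B" using iso by (auto simp: clone_iso_def bij_betw_def)
  have he: "\<And>i. i \<ge> 1 \<Longrightarrow> h (e i) = fe A i" using iso by (auto simp: clone_iso_def)
  have hs: "\<And>\<sigma> xs. length xs = ar \<sigma> \<Longrightarrow> set xs \<subseteq> C \<Longrightarrow> h (sig \<sigma> xs) = fsig A F \<sigma> (map h xs)"
    using iso by (auto simp: clone_iso_def)
  have hq: "\<And>n x ys. x \<in> C \<Longrightarrow> length ys = n \<Longrightarrow> set ys \<subseteq> C \<Longrightarrow> h (q n x ys) = fq A n (h x) (map h ys)"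
    using iso by (auto simp: clone_iso_def)
  have BF: "B \<subseteq> full_fun A" using ba by (simp add: block_alg_def)
  have qC: "\<And>n x ys. x \<in> C \<Longrightarrow> length ys = n \<Longrightarrow> set ys \<subseteq> C \<Longrightarrow> q n x ys \<in> C"
    using cs by (auto simp: clone_sig_alg_def)
  have sC: "\<And>\<sigma> xs. length xs = ar \<sigma> \<Longrightarrow> set xs \<subseteq> C \<Longrightarrow> sig \<sigma> xs \<in> C"
    using cs by (auto simp: clone_sig_alg_def tau_alg_def)
  have eC: "\<And>i. i \<ge> 1 \<Longrightarrow> e i \<in> C" using cs by (auto simp: clone_sig_alg_def)
  have hF: "\<And>x. x \<in> C \<Longrightarrow> h x \<in> full_fun A" using img BF by blast
  have mF: "\<And>ys. set ys \<subseteq> C \<Longrightarrow> set (map h ys) \<subseteq> full_fun A" using hF by auto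
  have injD: "\<And>x y. x \<in> C \<Longrightarrow> y \<in> C \<Longrightarrow> h x = h y \<Longrightarrow> x = y" using inj by (meson inj_onD)
  have me: "\<And>a b. 1 \<le> a \<Longrightarrow> map h (map e [a..<b]) = map (fe A) [a..<b]"
    using he by auto
  have meC: "\<And>a b. 1 \<le> a \<Longrightarrow> set (map e [a..<b]) \<subseteq> C"
    using eC by auto
  have C1: "\<forall>n ys i. length ys = n \<and> set ys \<subseteq> C \<and> 1 \<le> i \<and> i \<le> n \<longrightarrow> q n (e i) ys = ys ! (i - 1)"
  proof (intro allI impI)
    fix n ys i assume a: "length ys = n \<and> set ys \<subseteq> C \<and> 1 \<le> i \<and> i \<le> n"
    have yi: "ys ! (i - 1) \<in> C" using a nth_mem[of "i - 1" ys] by auto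
    have "h (q n (e i) ys) = fq A n (fe A i) (map h ys)" using a hq eC he by auto
    also have "\<dots> = map h ys ! (i - 1)" using a mF by (intro fC1) auto
    also have "\<dots> = h (ys ! (i - 1))" using a by auto
    finally show "q n (e i) ys = ys ! (i - 1)" using a yi qC eC by (intro injD) auto
  qed
  have C2: "\<forall>n ys j. length ys = n \<and> set ys \<subseteq> C \<and> j > n \<longrightarrow> q n (e j) ys = e j"
  proof (intro allI impI)
    fix n ys j assume a: "length ys = n \<and> set ys \<subseteq> C \<and> j > n"
    have "h (q n (e j) ys) = fq A n (fe A j) (map h ys)" using a hq eC he by auto
    also have "\<dots> = fe A j" using a mF by (intro fC2) auto
    also have "\<dots> = h (e j)" using a he by auto
    finally show "q n (e j) ys = e j" using a qC eC by (intro injD) auto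
  qed
  have C3: "\<forall>n x. x \<in> C \<longrightarrow> q n x (map e [1..<n+1]) = x"
  proof (intro allI impI)
    fix n x assume a: "x \<in> C"
    have "h (q n x (map e [1..<n+1])) = fq A n (h x) (map h (map e [1..<n+1]))"
      using a hq meC by auto
    also have "\<dots> = fq A n (h x) (map (fe A) [1..<n+1])" by (simp only: me[OF order_refl])
    also have "\<dots> = h x" using a hF by (intro fC3) auto
    finally show "q n x (map e [1..<n+1]) = x" using a qC meC by (intro injD) auto
  qed
  have C4: "\<forall>n k x ys. n > k \<and> x \<in> C \<and> length ys = k \<and> set ys \<subseteq> C \<longrightarrow>
        q k x ys = q n x (ys @ map e [k+1..<n+1])"
  proof (intro allI impI)
    fix n k x ys assume a: "n > k \<and> x \<in> C \<and> length ys = k \<and> set ys \<subseteq> C"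
    have s2: "set (ys @ map e [k+1..<n+1]) \<subseteq> C" using a meC[of "k+1" "n+1"] by auto
    have "h (q k x ys) = fq A k (h x) (map h ys)" using a hq by auto
    also have "\<dots> = fq A n (h x) (map h ys @ map (fe A) [k+1..<n+1])"
      using a hF mF by (intro fC4) auto
    also have "\<dots> = fq A n (h x) (map h (ys @ map e [k+1..<n+1]))" by (simp only: map_append me[of "k+1" "n+1", OF le_add2])
    also have "\<dots> = h (q n x (ys @ map e [k+1..<n+1]))" using a s2 by (intro hq[symmetric]) auto
    finally show "q k x ys = q n x (ys @ map e [k+1..<n+1])" using a s2 qC by (intro injD) auto
  qed
  have C5: "\<forall>n x ys zs. x \<in> C \<and> length ys = n \<and> set ys \<subseteq> C \<and> length zs = n \<and> set zs \<subseteq> C \<longrightarrow>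
        q n (q n x ys) zs = q n x (map (\<lambda>y. q n y zs) ys)"
  proof (intro allI impI)
    fix n x ys zs assume a: "x \<in> C \<and> length ys = n \<and> set ys \<subseteq> C \<and> length zs = n \<and> set zs \<subseteq> C"
    have s2: "set (map (\<lambda>y. q n y zs) ys) \<subseteq> C" using a qC by auto
    have "h (q n (q n x ys) zs) = fq A n (h (q n x ys)) (map h zs)" using a qC hq by auto
    also have "\<dots> = fq A n (fq A n (h x) (map h ys)) (map h zs)" using a hq by auto
    also have "\<dots> = fq A n (h x) (map (\<lambda>y. fq A n y (map h zs)) (map h ys))"
      using a hF mF by (intro fC5) auto
    also have "map (\<lambda>y. fq A n y (map h zs)) (map h ys) = map h (map (\<lambda>y. q n y zs) ys)"
      using a hq by auto
    also have "fq A n (h x) \<dots> = h (q n x (map (\<lambda>y. q n y zs) ys))" using a s2 by (intro hq[symmetric]) auto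
    finally show "q n (q n x ys) zs = q n x (map (\<lambda>y. q n y zs) ys)" using a s2 qC by (intro injD) auto
  qed
  have C6: "\<forall>n \<sigma> xs ys. length xs = ar \<sigma> \<and> set xs \<subseteq> C \<and> length ys = n \<and> set ys \<subseteq> C \<longrightarrow>
        q n (sig \<sigma> xs) ys = sig \<sigma> (map (\<lambda>x. q n x ys) xs)"
  proof (intro allI impI)
    fix n \<sigma> xs ys assume a: "length xs = ar \<sigma> \<and> set xs \<subseteq> C \<and> length ys = n \<and> set ys \<subseteq> C"
    have s2: "set (map (\<lambda>x. q n x ys) xs) \<subseteq> C" using a qC by auto
    have "h (q n (sig \<sigma> xs) ys) = fq A n (h (sig \<sigma> xs)) (map h ys)" using a sC hq by auto
    also have "\<dots> = fq A n (fsig A F \<sigma> (map h xs)) (map h ys)" using a hs by auto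
    also have "\<dots> = fsig A F \<sigma> (map (\<lambda>x. fq A n x (map h ys)) (map h xs))"
      using a mF by (intro fC6) auto
    also have "map (\<lambda>x. fq A n x (map h ys)) (map h xs) = map h (map (\<lambda>x. q n x ys) xs)"
      using a hq by auto
    also have "fsig A F \<sigma> \<dots> = h (sig \<sigma> (map (\<lambda>x. q n x ys) xs))" using a s2 by (intro hs[symmetric]) auto
    finally show "q n (sig \<sigma> xs) ys = sig \<sigma> (map (\<lambda>x. q n x ys) xs)" using a s2 qC sC by (intro injD) auto
  qed
  have fd: "finite_dim q e a" if aC: "a \<in> C" for a
  proof -
    have "h a \<in> B" using aC img by blast
    then obtain n f where hf: "h a = top_ext A n f" using ba by (auto simp: block_alg_def)
    have "{m. m \<ge> 1 \<and> \<not> indep_of q e a m} \<subseteq> {..n}"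
    proof
      fix m assume m: "m \<in> {m. m \<ge> 1 \<and> \<not> indep_of q e a m}"
      show "m \<in> {..n}"
      proof (rule ccontr)
        assume "m \<notin> {..n}"
        then have mn: "m > n" by simp
        let ?es = "map e [1..<m] @ [e (m+1)]"
        have es: "set ?es \<subseteq> C" using meC[of 1 m] eC by auto
        have "h (q m a ?es) = fq A m (h a) (map h ?es)" using aC es m by (intro hq) auto
        also have "map h ?es = map (fe A) [1..<m] @ [fe A (m+1)]" by (simp only: map_append list.map me[OF order_refl] he[OF le_add2])
        also have "fq A m (h a) \<dots> = h a" unfolding hf using mn by (rule f_indep)
        moreover have "q m a ?es \<in> C" using aC es m by (intro qC) auto
        ultimately have "q m a ?es = a" using aC by (intro injD) auto
        then show False using m by (simp add: indep_of_def)
      qed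
    qed
    then show ?thesis unfolding finite_dim_def using finite_subset by blast
  qed
  have "clone_alg ar C sig q e" unfolding clone_alg_def by (intro conjI cs C1 C2 C3 C4 C5 C6)
  then show ?thesis unfolding FiCA_def using fd by blast
qed


lemma list_lift: "set xs \<subseteq> f ` C \<Longrightarrow> \<exists>ys. xs = map f ys \<and> set ys \<subseteq> C"
proof (induction xs)
  case Nil then show ?case by simp
next
  case (Cons x xs)
  then obtain ys where "xs = map f ys" "set ys \<subseteq> C" by auto
  moreover obtain y where "y \<in> C" "x = f y" using Cons.prems by auto
  ultimately show ?case by (intro exI[of _ "y # ys"]) auto
qed

locale fica =
  fixes ar :: "'sym \<Rightarrow> nat" and C :: "'c set" and sig q e
  assumes fica: "FiCA ar C sig q e"
begin

lemma ca: "clone_alg ar C sig q e" using fica by (simp add: FiCA_def)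

lemma tauC: "tau_alg ar C sig" using ca by (simp add: clone_alg_def clone_sig_alg_def)

lemma qC: "x \<in> C \<Longrightarrow> length ys = n \<Longrightarrow> set ys \<subseteq> C \<Longrightarrow> q n x ys \<in> C"
  using ca by (auto simp: clone_alg_def clone_sig_alg_def)

lemma sC: "length xs = ar \<sigma> \<Longrightarrow> set xs \<subseteq> C \<Longrightarrow> sig \<sigma> xs \<in> C"
  using ca by (auto simp: clone_alg_def clone_sig_alg_def tau_alg_def)

lemma eC: "1 \<le> i \<Longrightarrow> e i \<in> C"
  using ca by (auto simp: clone_alg_def clone_sig_alg_def)

lemma C1_all: "\<forall>n ys i. length ys = n \<and> set ys \<subseteq> C \<and> 1 \<le> i \<and> i \<le> n \<longrightarrow> q n (e i) ys = ys ! (i - 1)"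
  using ca unfolding clone_alg_def by (elim conjE) assumption

lemma C1: "length ys = n \<Longrightarrow> set ys \<subseteq> C \<Longrightarrow> 1 \<le> i \<Longrightarrow> i \<le> n \<Longrightarrow> q n (e i) ys = ys ! (i - 1)"
  using C1_all by blast

lemma C2_all: "\<forall>n ys j. length ys = n \<and> set ys \<subseteq> C \<and> j > n \<longrightarrow> q n (e j) ys = e j"
  using ca unfolding clone_alg_def by (elim conjE) assumption

lemma C2: "length ys = n \<Longrightarrow> set ys \<subseteq> C \<Longrightarrow> j > n \<Longrightarrow> q n (e j) ys = e j"
  using C2_all by blast

lemma C3_all: "\<forall>n x. x \<in> C \<longrightarrow> q n x (map e [1..<n+1]) = x"
  using ca unfolding clone_alg_def by (elim conjE) assumption

lemma C3: "x \<in> C \<Longrightarrow> q n x (map e [1..<n+1]) = x"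
  using C3_all by blast

lemma C4_all: "\<forall>n k x ys. n > k \<and> x \<in> C \<and> length ys = k \<and> set ys \<subseteq> C \<longrightarrow> q k x ys = q n x (ys @ map e [k+1..<n+1])"
  using ca unfolding clone_alg_def by (elim conjE) assumption

lemma C4: "n > k \<Longrightarrow> x \<in> C \<Longrightarrow> length ys = k \<Longrightarrow> set ys \<subseteq> C \<Longrightarrow>
        q k x ys = q n x (ys @ map e [k+1..<n+1])"
  using C4_all by blast

lemma C5_all: "\<forall>n x ys zs. x \<in> C \<and> length ys = n \<and> set ys \<subseteq> C \<and> length zs = n \<and> set zs \<subseteq> C \<longrightarrow> q n (q n x ys) zs = q n x (map (\<lambda>y. q n y zs) ys)"
  using ca unfolding clone_alg_def by (elim conjE) assumption

lemma C5: "x \<in> C \<Longrightarrow> length ys = n \<Longrightarrow> set ys \<subseteq> C \<Longrightarrow> length zs = n \<Longrightarrow> set zs \<subseteq> C \<Longrightarrow>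
        q n (q n x ys) zs = q n x (map (\<lambda>y. q n y zs) ys)"
  using C5_all by blast

lemma C6_all: "\<forall>n \<sigma> xs ys. length xs = ar \<sigma> \<and> set xs \<subseteq> C \<and> length ys = n \<and> set ys \<subseteq> C \<longrightarrow> q n (sig \<sigma> xs) ys = sig \<sigma> (map (\<lambda>x. q n x ys) xs)"
  using ca unfolding clone_alg_def by (elim conjE) assumption

lemma C6: "length xs = ar \<sigma> \<Longrightarrow> set xs \<subseteq> C \<Longrightarrow> length ys = n \<Longrightarrow> set ys \<subseteq> C \<Longrightarrow>
        q n (sig \<sigma> xs) ys = sig \<sigma> (map (\<lambda>x. q n x ys) xs)"
  using C6_all by blast

definition dd :: "'c \<Rightarrow> nat" where
  "dd a = Max (insert 0 {n. n \<ge> 1 \<and> \<not> indep_of q e a n})"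

lemma indep_above:
  assumes "a \<in> C" "n > dd a"
  shows "indep_of q e a n"
proof (rule ccontr)
  assume "\<not> indep_of q e a n"
  moreover have "n \<ge> 1" using assms by simp
  moreover have "finite {n. n \<ge> 1 \<and> \<not> indep_of q e a n}"
    using fica assms by (auto simp: FiCA_def finite_dim_def)
  ultimately have "n \<le> dd a" unfolding dd_def by (intro Max_ge) auto
  then show False using assms by simp
qed

lemma step:
  assumes a: "a \<in> C" and ind: "indep_of q e a N" and N: "N \<ge> 1"
    and ys: "length ys = N" "set ys \<subseteq> C"
  shows "q N a ys = q (N - 1) a (butlast ys)"
proof -
  let ?es = "map e [1..<N] @ [e (N+1)]"
  have esC: "set ?es \<subseteq> C" using eC by auto
  have esl: "length ?es = N" using N by simp
  have gen: "q N a zs = q N a (butlast zs @ [e (N+1)])" if zs: "length zs = N" "set zs \<subseteq> C" for zs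
  proof -
    have "q N a zs = q N (q N a ?es) zs" using ind by (simp add: indep_of_def)
    also have "\<dots> = q N a (map (\<lambda>y. q N y zs) ?es)" using a esC esl zs by (intro C5) auto
    also have "map (\<lambda>y. q N y zs) ?es = butlast zs @ [e (N+1)]"
    proof -
      have "map (\<lambda>y. q N y zs) (map e [1..<N]) = butlast zs"
      proof (rule nth_equalityI)
        show "length (map (\<lambda>y. q N y zs) (map e [1..<N])) = length (butlast zs)" using zs by simp
        fix i assume "i < length (map (\<lambda>y. q N y zs) (map e [1..<N]))"
        then have i: "i < N - 1" by simp
        have "map (\<lambda>y. q N y zs) (map e [1..<N]) ! i = q N (e (i+1)) zs" using i by simp
        also have "\<dots> = zs ! i" using zs i by (subst C1) auto
        also have "\<dots> = butlast zs ! i" using zs i by (simp add: nth_butlast)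
        finally show "map (\<lambda>y. q N y zs) (map e [1..<N]) ! i = butlast zs ! i" .
      qed
      moreover have "q N (e (N+1)) zs = e (N+1)" using zs by (intro C2) auto
      ultimately show ?thesis by simp
    qed
    finally show ?thesis .
  qed
  let ?ys' = "butlast ys @ [e N]"
  have ys': "length ?ys' = N" "set ?ys' \<subseteq> C" using ys N eC by (auto dest: in_set_butlastD)
  have "q N a ys = q N a (butlast ys @ [e (N+1)])" using gen ys by blast
  also have "\<dots> = q N a ?ys'" using gen[OF ys'] by simp
  also have "[N - 1 + 1..<N + 1] = [N]" using N by (simp add: upt_Suc)
  then have "q N a ?ys' = q N a (butlast ys @ map e [N - 1 + 1..<N + 1])" by simp
  also have "\<dots> = q (N - 1) a (butlast ys)"
    using N a ys by (intro C4[symmetric]) (auto dest: in_set_butlastD)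
  finally show ?thesis .
qed

lemma reduce:
  assumes a: "a \<in> C"
  shows "dd a \<le> N \<Longrightarrow> length ys = N \<Longrightarrow> set ys \<subseteq> C \<Longrightarrow> q N a ys = q (dd a) a (take (dd a) ys)"
proof (induction N arbitrary: ys)
  case 0 then show ?case by simp
next
  case (Suc M)
  show ?case
  proof (cases "dd a = Suc M")
    case True then show ?thesis using Suc.prems by simp
  next
    case False
    then have dM: "dd a \<le> M" using Suc.prems by simp
    have "q (Suc M) a ys = q M a (butlast ys)"
      using step[OF a indep_above[OF a] _ Suc.prems(2,3)] dM by simp
    also have "\<dots> = q (dd a) a (take (dd a) (butlast ys))"
      using Suc.prems dM by (intro Suc.IH) (auto dest: in_set_butlastD)
    also have "take (dd a) (butlast ys) = take (dd a) ys"
      using dM Suc.prems by (simp add: butlast_conv_take min_def)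
    finally show ?thesis .
  qed
qed

definition hh :: "'c \<Rightarrow> (nat \<Rightarrow> 'c) \<Rightarrow> 'c" where
  "hh a = top_ext C (dd a) (q (dd a) a)"

lemma mapS: "s \<in> seqs C \<Longrightarrow> set (map s [0..<N]) \<subseteq> C"
  by (auto simp: seqs_def)

lemma hh_app:
  assumes "a \<in> C" "dd a \<le> N" "s \<in> seqs C"
  shows "hh a s = q N a (map s [0..<N])"
proof -
  have "hh a s = q (dd a) a (map s [0..<dd a])" using assms by (simp add: hh_def top_ext_def)
  also have "\<dots> = q (dd a) a (take (dd a) (map s [0..<N]))"
    using assms by (simp add: take_map)
  also have "\<dots> = q N a (map s [0..<N])"
    using assms mapS by (intro reduce[symmetric]) auto
  finally show ?thesis .
qed

lemma hh_in: "a \<in> C \<Longrightarrow> s \<in> seqs C \<Longrightarrow> hh a s \<in> C"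
  using hh_app[of a "dd a" s] qC mapS by auto

lemma hh_ext: "hh a \<in> extensional (seqs C)"
  by (simp add: hh_def top_ext_def)

lemma hh_full: "a \<in> C \<Longrightarrow> hh a \<in> full_fun C"
  using hh_in hh_ext by (auto simp: full_fun_def PiE_def)

lemma hh_e: assumes "1 \<le> i" shows "hh (e i) = fe C i"
proof (rule extensionalityI[OF hh_ext])
  show "fe C i \<in> extensional (seqs C)" by (simp add: fe_def)
  fix s assume s: "s \<in> seqs C"
  let ?N = "dd (e i) + i"
  have "hh (e i) s = q ?N (e i) (map s [0..<?N])" using assms eC s by (intro hh_app) auto
  also have "\<dots> = map s [0..<?N] ! (i - 1)" using assms s mapS by (intro C1) auto
  also have "\<dots> = s (i - 1)" using assms by simp
  finally show "hh (e i) s = fe C i s" using s by (simp add: fe_app)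
qed

lemma le_sum: "x \<in> set xs \<Longrightarrow> (f x :: nat) \<le> sum_list (map f xs)"
  by (induction xs) auto

lemma hh_sig:
  assumes xs: "length xs = ar \<sigma>" "set xs \<subseteq> C"
  shows "hh (sig \<sigma> xs) = fsig C sig \<sigma> (map hh xs)"
proof (rule extensionalityI[OF hh_ext])
  show "fsig C sig \<sigma> (map hh xs) \<in> extensional (seqs C)" by (simp add: fsig_def)
  fix s assume s: "s \<in> seqs C"
  let ?N = "dd (sig \<sigma> xs) + sum_list (map dd xs)"
  let ?S = "map s [0..<?N]"
  have "hh (sig \<sigma> xs) s = q ?N (sig \<sigma> xs) ?S" using xs sC s by (intro hh_app) auto
  also have "\<dots> = sig \<sigma> (map (\<lambda>x. q ?N x ?S) xs)" using xs s mapS by (intro C6) auto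
  also have "map (\<lambda>x. q ?N x ?S) xs = map (\<lambda>x. hh x s) xs"
  proof (rule map_cong[OF refl])
    fix x assume x: "x \<in> set xs"
    have "dd x \<le> ?N" using le_sum[OF x, of dd] by simp
    then show "q ?N x ?S = hh x s" using x xs s by (intro hh_app[symmetric]) auto
  qed
  finally show "hh (sig \<sigma> xs) s = fsig C sig \<sigma> (map hh xs) s"
    using s by (simp add: fsig_app o_def)
qed

lemma hh_q:
  assumes x: "x \<in> C" and ys: "length ys = n" "set ys \<subseteq> C"
  shows "hh (q n x ys) = fq C n (hh x) (map hh ys)"
proof (rule extensionalityI[OF hh_ext fq_ext])
  fix s assume s: "s \<in> seqs C"
  let ?N = "Suc (n + dd x + dd (q n x ys) + sum_list (map dd ys))"
  let ?S = "map s [0..<?N]"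
  let ?t = "\<lambda>k. if k < n then (map hh ys ! k) s else s k"
  have SC: "set ?S \<subseteq> C" using mapS[OF s] .
  have ddy: "dd y \<le> ?N" if "y \<in> set ys" for y using le_sum[OF that, of dd] by simp
  have t: "?t \<in> seqs C" using ys hh_full by (intro seqs_upd[OF s]) auto
  have mt: "map ?t [0..<?N] = map (\<lambda>y. q ?N y ?S) ys @ map s [n..<?N]"
  proof (rule nth_equalityI)
    show "length (map ?t [0..<?N]) = length (map (\<lambda>y. q ?N y ?S) ys @ map s [n..<?N])"
      using ys by simp
    fix k assume "k < length (map ?t [0..<?N])"
    then have k: "k < ?N" by simp
    show "map ?t [0..<?N] ! k = (map (\<lambda>y. q ?N y ?S) ys @ map s [n..<?N]) ! k"
    proof (cases "k < n")
      case True
      have yk: "ys ! k \<in> set ys" using True ys by simp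
      have "map ?t [0..<?N] ! k = hh (ys ! k) s" using True k ys by simp
      also have "\<dots> = q ?N (ys ! k) ?S" using yk ys s ddy[OF yk] by (intro hh_app) auto
      finally show ?thesis using True ys by (simp add: nth_append)
    next
      case False
      then show ?thesis using k ys by (simp add: nth_append)
    qed
  qed
  have me: "map (\<lambda>j. q ?N (e j) ?S) [n+1..<?N+1] = map s [n..<?N]"
  proof (rule nth_equalityI)
    show "length (map (\<lambda>j. q ?N (e j) ?S) [n+1..<?N+1]) = length (map s [n..<?N])" by simp
    fix i assume "i < length (map (\<lambda>j. q ?N (e j) ?S) [n+1..<?N+1])"
    then have i: "i < ?N - n" by simp
    have "map (\<lambda>j. q ?N (e j) ?S) [n+1..<?N+1] ! i = q ?N (e (n+1+i)) ?S" using i by simp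
    also have "\<dots> = ?S ! (n + i)" using i SC by (subst C1) auto
    also have "\<dots> = s (n + i)" using i by simp
    finally show "map (\<lambda>j. q ?N (e j) ?S) [n+1..<?N+1] ! i = map s [n..<?N] ! i" using i by simp
  qed
  have ysC: "set (ys @ map e [n+1..<?N+1]) \<subseteq> C" using ys eC by auto
  have "hh (q n x ys) s = q ?N (q n x ys) ?S" using x ys s qC by (intro hh_app) auto
  also have "\<dots> = q ?N (q ?N x (ys @ map e [n+1..<?N+1])) ?S" using x ys by (subst C4[of n ?N]) auto
  also have "\<dots> = q ?N x (map (\<lambda>y. q ?N y ?S) (ys @ map e [n+1..<?N+1]))"
    using x ys ysC SC by (intro C5) auto
  also have "\<dots> = q ?N x (map ?t [0..<?N])" by (simp only: map_append map_map o_def me mt)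
  also have "\<dots> = hh x ?t" using x t by (intro hh_app[symmetric]) auto
  also have "\<dots> = fq C n (hh x) (map hh ys) s" using s by (simp add: fq_app)
  finally show "hh (q n x ys) s = fq C n (hh x) (map hh ys) s" .
qed

lemma hh_inj: "inj_on hh C"
proof (rule inj_onI)
  fix a b assume a: "a \<in> C" and b: "b \<in> C" and eq: "hh a = hh b"
  let ?N = "dd a + dd b"
  let ?s = "\<lambda>k. e (k + 1)"
  have s: "?s \<in> seqs C" using eC by (auto simp: seqs_def)
  have ms: "map ?s [0..<?N] = map e [1..<?N+1]"
    by (rule nth_equalityI) auto
  have "a = q ?N a (map e [1..<?N+1])" by (rule C3[OF a, symmetric])
  also have "\<dots> = hh a ?s" using hh_app[of a ?N ?s] a s unfolding ms by simp
  also have "\<dots> = hh b ?s" using eq by simp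
  also have "\<dots> = q ?N b (map e [1..<?N+1])" using hh_app[of b ?N ?s] b s unfolding ms by simp
  also have "\<dots> = b" by (rule C3[OF b])
  finally show "a = b" .
qed

lemma rep: "\<exists>(A::'c set) F B h. block_alg ar A F B \<and>
                clone_iso ar C sig q e B (fsig A F) (fq A) (fe A) h"
proof (intro exI conjI)
  show "block_alg ar C sig (hh ` C)"
    unfolding block_alg_def clone_sig_alg_def
  proof (intro conjI allI impI ballI)
    show "tau_alg ar C sig" by (rule tauC)
    show "hh ` C \<subseteq> full_fun C" using hh_full by auto
    show "tau_alg ar (hh ` C) (fsig C sig)" unfolding tau_alg_def
    proof (intro allI impI)
      fix \<sigma> xs assume a: "length xs = ar \<sigma> \<and> set xs \<subseteq> hh ` C"
      then obtain xs' where "xs = map hh xs'" "set xs' \<subseteq> C" using list_lift by blast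
      moreover then have "length xs' = ar \<sigma>" using a by simp
      ultimately show "fsig C sig \<sigma> xs \<in> hh ` C" using hh_sig[of xs' \<sigma>] sC[of xs' \<sigma>] by (metis imageI)
    qed
    fix n x ys assume a: "x \<in> hh ` C \<and> length ys = n \<and> set ys \<subseteq> hh ` C"
    then obtain ys' where ys': "ys = map hh ys'" "set ys' \<subseteq> C" using list_lift by blast
    obtain x' where x': "x' \<in> C" "x = hh x'" using a by auto
    have l: "length ys' = n" using a ys' by simp
    have "q n x' ys' \<in> C" using qC[OF x'(1) l ys'(2)] .
    moreover have "fq C n x ys = hh (q n x' ys')" using hh_q[OF x'(1) l ys'(2)] ys' x' by simp
    ultimately show "fq C n x ys \<in> hh ` C" by simp
  next
    fix i :: nat assume "1 \<le> i"
    then show "fe C i \<in> hh ` C" using hh_e eC by (metis imageI)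
  next
    fix \<phi> assume "\<phi> \<in> hh ` C"
    then obtain a where a: "a \<in> C" "\<phi> = hh a" by auto
    show "\<exists>n f. finitary_op C n f \<and> \<phi> = top_ext C n f"
      using a qC by (intro exI[of _ "dd a"] exI[of _ "q (dd a) a"]) (auto simp: finitary_op_def hh_def)
  qed
  show "clone_iso ar C sig q e (hh ` C) (fsig C sig) (fq C) (fe C) hh"
    unfolding clone_iso_def
    using hh_inj hh_e hh_sig hh_q by (auto simp: bij_betw_def)
qed

end


theorem theorem7p7:
  fixes ar :: "'sym \<Rightarrow> nat"
  shows "(\<forall>(C::'c set) sig q e. FiCA ar C sig q e \<longrightarrow>
            (\<exists>(A::'c set) F B h. block_alg ar A F B \<and>
                clone_iso ar C sig q e B (fsig A F) (fq A) (fe A) h))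
       \<and> (\<forall>(A::'a set) F B (C::'c set) sig q e h.
            clone_sig_alg ar C sig q e \<and> block_alg ar A F B \<and>
            clone_iso ar C sig q e B (fsig A F) (fq A) (fe A) h \<longrightarrow> FiCA ar C sig q e)"
proof (intro conjI allI impI)
  fix C :: "'c set" and sig q e
  assume "FiCA ar C sig q e"
  then interpret fica ar C sig q e by unfold_locales
  show "\<exists>(A::'c set) F B h. block_alg ar A F B \<and>
                clone_iso ar C sig q e B (fsig A F) (fq A) (fe A) h" by (rule rep)
next
  fix A :: "'a set" and F B and C :: "'c set" and sig q e h
  assume "clone_sig_alg ar C sig q e \<and> block_alg ar A F B \<and>
            clone_iso ar C sig q e B (fsig A F) (fq A) (fe A) h"
  then show "FiCA ar C sig q e" using transfer by blast
qed

end
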